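(* Let $G\le S_n$ be fusion controlled and $T\in\mathcal T(G_0)$. (i) For every connected component $C$ of $\widetilde P_0(G)$ containing at least one vertex of type $T$, the number of components of $\widetilde P_0(G)$ containing at least one vertex of type $T$ equals $\dfrac{\mu_T(G)}{\phi(o(T))\,k_C(T)}$. (ii) If $T$ is isolated in $P_0(\mathcal T(G))$, this number equals $\dfrac{\mu_T(G)}{\phi(o(T))}$.
   Context: $G_0=G\setminus\{1\}$; $[x]=\{y:\langle y\rangle=\langle x\rangle\}$; $\widetilde P_0(G)$: vertex set $\{[x]:x\in G_0\}$, distinct $[x],[y]$ adjacent iff some representatives are one a positive power of the other. For $\psi\in S_n$, $T_\psi$ is the partition of $n$ given by orbit lengths of $\langle\psi\rangle$; the type of $[\psi]$ is $T_\psi$. For $T=[m_1^{t_1},\dots,m_k^{t_k}]$, $o(T)=\mathrm{lcm}(m_i)$ and $T^a=[(m_i/\gcd(a,m_i))^{t_i\gcd(a,m_i)}]_i$. $\mathcal T(G_0)=\{T_\psi:\psi\in G_0\}$; $P_0(\mathcal T(G))$: vertex set $\mathcal T(G_0)$, distinct $T,T'$ adjacent iff one is a power of the other. $\mu_T(G)$ is the number of elements of $G$ of type $T$; $\phi$ is Euler's totient; $k_C(T)$ is the number of vertices of $C$ of type $T$. $G$ is fusion controlled if for all $\psi\in G$, $x\in S_n$ with $x^{-1}\psi x\in G$ there is $y\in N_{S_n}(G)$ with $x^{-1}\psi x=y^{-1}\psi y$. *)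

theory Defs
  imports "HOL-Combinatorics.Permutations" "HOL-Library.Multiset" "HOL-Number_Theory.Totient"
begin

definition Sym :: "nat \<Rightarrow> (nat \<Rightarrow> nat) set" where
  "Sym n = {p. p permutes {1..n}}"

definition perm_subgroup :: "nat \<Rightarrow> (nat \<Rightarrow> nat) set \<Rightarrow> bool" where
  "perm_subgroup n G \<longleftrightarrow> G \<subseteq> Sym n \<and> id \<in> G \<and>
     (\<forall>p\<in>G. \<forall>q\<in>G. p \<circ> q \<in> G) \<and> (\<forall>p\<in>G. inv p \<in> G)"

definition conj_perm :: "(nat \<Rightarrow> nat) \<Rightarrow> (nat \<Rightarrow> nat) \<Rightarrow> (nat \<Rightarrow> nat)" where
  "conj_perm x p = inv x \<circ> p \<circ> x"

definition normalizer :: "nat \<Rightarrow> (nat \<Rightarrow> nat) set \<Rightarrow> (nat \<Rightarrow> nat) set" where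
  "normalizer n G = {y \<in> Sym n. conj_perm y ` G = G}"

definition fusion_controlled :: "nat \<Rightarrow> (nat \<Rightarrow> nat) set \<Rightarrow> bool" where
  "fusion_controlled n G \<longleftrightarrow>
     (\<forall>p\<in>G. \<forall>x\<in>Sym n. conj_perm x p \<in> G \<longrightarrow>
        (\<exists>y\<in>normalizer n G. conj_perm x p = conj_perm y p))"

text \<open>Cyclic subgroup generated by x (elements have finite order, so the
  positive powers already form the subgroup).\<close>
definition cyc :: "(nat \<Rightarrow> nat) \<Rightarrow> (nat \<Rightarrow> nat) set" where
  "cyc x = range (\<lambda>k. x ^^ k)"

definition cls :: "(nat \<Rightarrow> nat) set \<Rightarrow> (nat \<Rightarrow> nat) \<Rightarrow> (nat \<Rightarrow> nat) set" where
  "cls G x = {y \<in> G. cyc y = cyc x}"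

definition rpg_vertices :: "(nat \<Rightarrow> nat) set \<Rightarrow> (nat \<Rightarrow> nat) set set" where
  "rpg_vertices G = {cls G x | x. x \<in> G \<and> x \<noteq> id}"

definition rpg_adj :: "(nat \<Rightarrow> nat) set \<Rightarrow> (nat \<Rightarrow> nat) set \<Rightarrow> (nat \<Rightarrow> nat) set \<Rightarrow> bool" where
  "rpg_adj G X Y \<longleftrightarrow> X \<in> rpg_vertices G \<and> Y \<in> rpg_vertices G \<and> X \<noteq> Y \<and>
     (\<exists>x\<in>X. \<exists>y\<in>Y. \<exists>k>0. y = x ^^ k \<or> x = y ^^ k)"

definition rpg_components :: "(nat \<Rightarrow> nat) set \<Rightarrow> (nat \<Rightarrow> nat) set set set" where
  "rpg_components G =
     {{Y \<in> rpg_vertices G. (rpg_adj G)\<^sup>*\<^sup>* X Y} | X. X \<in> rpg_vertices G}"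

definition orbit_of :: "(nat \<Rightarrow> nat) \<Rightarrow> nat \<Rightarrow> nat set" where
  "orbit_of p i = range (\<lambda>k. (p ^^ k) i)"

definition perm_type :: "nat \<Rightarrow> (nat \<Rightarrow> nat) \<Rightarrow> nat multiset" where
  "perm_type n p = image_mset card (mset_set (orbit_of p ` {1..n}))"

definition type_order :: "nat multiset \<Rightarrow> nat" where
  "type_order T = Lcm (set_mset T)"

definition type_pow :: "nat multiset \<Rightarrow> nat \<Rightarrow> nat multiset" where
  "type_pow T a = \<Sum>\<^sub># (image_mset (\<lambda>m. replicate_mset (gcd a m) (m div gcd a m)) T)"

definition types0 :: "nat \<Rightarrow> (nat \<Rightarrow> nat) set \<Rightarrow> nat multiset set" where
  "types0 n G = {perm_type n p | p. p \<in> G \<and> p \<noteq> id}"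

definition type_isolated :: "nat \<Rightarrow> (nat \<Rightarrow> nat) set \<Rightarrow> nat multiset \<Rightarrow> bool" where
  "type_isolated n G T \<longleftrightarrow>
     (\<forall>T'\<in>types0 n G. T' \<noteq> T \<longrightarrow> \<not> (\<exists>a. T' = type_pow T a \<or> T = type_pow T' a))"

definition mu :: "nat \<Rightarrow> (nat \<Rightarrow> nat) set \<Rightarrow> nat multiset \<Rightarrow> nat" where
  "mu n G T = card {p \<in> G. perm_type n p = T}"

text \<open>vertex X has type T (all elements of a class have the same type)\<close>
definition vertex_has_type :: "nat \<Rightarrow> nat multiset \<Rightarrow> (nat \<Rightarrow> nat) set \<Rightarrow> bool" where
  "vertex_has_type n T X \<longleftrightarrow> (\<exists>p\<in>X. perm_type n p = T)"

definition kC :: "nat \<Rightarrow> (nat \<Rightarrow> nat) set set \<Rightarrow> nat multiset \<Rightarrow> nat" where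
  "kC n C T = card {X \<in> C. vertex_has_type n T X}"

end

theory Submission
  imports Defs "HOL-Combinatorics.Orbits" "HOL-Combinatorics.Cycles"
begin


lemma orbit_of_eq_orbit:
  assumes "permutation p" shows "orbit_of p i = orbit p i"
  unfolding orbit_of_def orbit_altdef_permutation[OF assms] by auto

lemma perm_card_orbit:
  assumes "permutation p"
  shows "card (orbit_of p i) = funpow_dist1 p i i"
proof -
  have s: "i \<in> orbit p i" using permutation_self_in_orbit[OF assms] .
  show ?thesis
    unfolding orbit_of_eq_orbit[OF assms] orbit_conv_funpow_dist1[OF s]
    by (simp add: card_image inj_on_funpow_dist1[OF s])
qed

lemma perm_mod_eq:
  assumes "permutation p"
  shows "(p ^^ a) i = (p ^^ b) i \<longleftrightarrow> a mod card (orbit_of p i) = b mod card (orbit_of p i)"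
proof -
  define d where "d = card (orbit_of p i)"
  have s: "i \<in> orbit p i" using permutation_self_in_orbit[OF assms] .
  have dd: "d = funpow_dist1 p i i" using perm_card_orbit[OF assms] d_def by simp
  have pd: "(p ^^ d) i = i" using funpow_dist1_prop[OF s] dd by simp
  have d0: "d > 0" using dd by simp
  have ea: "(p ^^ a) i = (p ^^ (a mod d)) i" "(p ^^ b) i = (p ^^ (b mod d)) i"
    using funpow_mod_eq[where f=p and n=d and x=i] pd by metis+
  have inj: "inj_on (\<lambda>n. (p ^^ n) i) {0..<d}" using inj_on_funpow_dist1[OF s] dd by simp
  show ?thesis unfolding d_def[symmetric] ea
    using inj d0 by (auto simp: inj_on_def)
qed

lemma perm_period:
  assumes "permutation p"
  shows "(p ^^ k) i = i \<longleftrightarrow> card (orbit_of p i) dvd k"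
  using perm_mod_eq[OF assms, of k i 0] by (simp add: mod_eq_0_iff_dvd)

lemma card_orbit_pos:
  assumes "permutation p" shows "card (orbit_of p i) > 0"
  using perm_card_orbit[OF assms] by simp

lemma orbit_of_self: "i \<in> orbit_of p i"
  unfolding orbit_of_def by (metis funpow_0 rangeI)

lemma orbit_of_funpow: "(p ^^ k) i \<in> orbit_of p i"
  unfolding orbit_of_def by auto

lemma orbit_of_sub:
  assumes "j \<in> orbit_of p i" shows "orbit_of p j \<subseteq> orbit_of p i"
proof
  fix x assume "x \<in> orbit_of p j"
  then obtain k l where "x = (p ^^ k) j" "j = (p ^^ l) i" using assms unfolding orbit_of_def by auto
  then have "x = (p ^^ (k + l)) i" by (simp add: funpow_add)
  then show "x \<in> orbit_of p i" unfolding orbit_of_def by auto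
qed

lemma orbit_of_eq:
  assumes "permutation p" "j \<in> orbit_of p i" shows "orbit_of p j = orbit_of p i"
  using assms orbit_of_eq_orbit[OF assms(1)] orbit_swap permutation_self_in_orbit
  by (metis orbit_of_sub subset_antisym)

lemma orbit_of_permutes_sub:
  assumes "p permutes S" "i \<in> S" shows "orbit_of p i \<subseteq> S"
  using assms unfolding orbit_of_def by (auto intro: permutes_in_funpow_image)

lemma orbit_of_permutes_out:
  assumes "p permutes S" "i \<notin> S" shows "orbit_of p i = {i}"
proof -
  have "(p ^^ k) i = i" for k using assms by (induction k) (auto simp: permutes_not_in)
  then show ?thesis unfolding orbit_of_def by auto
qed



definition ordp :: "nat \<Rightarrow> (nat \<Rightarrow> nat) \<Rightarrow> nat" where
  "ordp n p = type_order (perm_type n p)"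

lemma type_order_perm_type:
  "type_order (perm_type n p) = Lcm (card ` orbit_of p ` {1..n})"
proof -
  have "finite (orbit_of p ` {1..n})" by simp
  then show ?thesis unfolding type_order_def perm_type_def by (simp only: set_image_mset finite_set_mset_mset_set)
qed

lemma permutation_of_permutes: "(p::nat\<Rightarrow>nat) permutes {1..n} \<Longrightarrow> permutation p"
  unfolding permutation_permutes using finite_atLeastAtMost by blast

lemma dvd_ord_iff:
  "(\<forall>i\<in>{1..n}. card (orbit_of p i) dvd m) \<longleftrightarrow> ordp n p dvd m"
  unfolding ordp_def type_order_perm_type Lcm_dvd_iff by blast

lemma fun_eq_on_S:
  fixes f g :: "nat \<Rightarrow> nat"
  assumes "f permutes {1..n}" "g permutes {1..n}"
  shows "f = g \<longleftrightarrow> (\<forall>i\<in>{1..n}. f i = g i)"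
proof
  assume "\<forall>i\<in>{1..n}. f i = g i"
  then show "f = g" using assms by (intro ext) (metis permutes_not_in)
qed simp

lemma ord_char:
  assumes p: "p permutes {1..n}" shows "p ^^ k = id \<longleftrightarrow> ordp n p dvd k"
proof -
  have pp: "permutation p" using permutation_of_permutes[OF p] .
  have "p ^^ k = id \<longleftrightarrow> (\<forall>i\<in>{1..n}. (p ^^ k) i = id i)"
    using fun_eq_on_S[OF permutes_funpow[OF p] permutes_id] by blast
  also have "\<dots> \<longleftrightarrow> (\<forall>i\<in>{1..n}. card (orbit_of p i) dvd k)"
    using perm_period[OF pp] by simp
  finally show ?thesis using dvd_ord_iff by simp
qed

lemma pow_eq_iff_le:
  assumes p: "p permutes {1..n}" and ba: "b \<le> a"
  shows "p ^^ a = p ^^ b \<longleftrightarrow> a mod ordp n p = b mod ordp n p"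
proof -
  have pp: "permutation p" using permutation_of_permutes[OF p] .
  have "p ^^ a = p ^^ b \<longleftrightarrow> (\<forall>i\<in>{1..n}. (p ^^ a) i = (p ^^ b) i)"
    using fun_eq_on_S[OF permutes_funpow[OF p] permutes_funpow[OF p]] by blast
  also have "\<dots> \<longleftrightarrow> (\<forall>i\<in>{1..n}. card (orbit_of p i) dvd a - b)"
    using perm_mod_eq[OF pp] mod_eq_dvd_iff_nat[OF ba] by simp
  also have "\<dots> \<longleftrightarrow> ordp n p dvd a - b" using dvd_ord_iff by simp
  also have "\<dots> \<longleftrightarrow> a mod ordp n p = b mod ordp n p" using mod_eq_dvd_iff_nat[OF ba] by simp
  finally show ?thesis .
qed

lemma pow_eq_iff:
  assumes p: "p permutes {1..n}"
  shows "p ^^ a = p ^^ b \<longleftrightarrow> a mod ordp n p = b mod ordp n p"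
  using pow_eq_iff_le[OF p, of a b] pow_eq_iff_le[OF p, of b a] by (cases "b \<le> a") auto

lemma ord_pos:
  assumes p: "p permutes {1..n}" shows "ordp n p > 0"
proof -
  have "0 \<notin> card ` orbit_of p ` {1..n}"
    using card_orbit_pos[OF permutation_of_permutes[OF p]] by (metis image_iff less_irrefl)
  moreover have fin: "finite (card ` orbit_of p ` {1..n})" by simp
  ultimately show ?thesis unfolding ordp_def type_order_perm_type using Lcm_0_iff[OF fin]
    by (metis gr0I)
qed

lemma funpow_mod_ord:
  assumes p: "p permutes {1..n}" shows "p ^^ (k mod ordp n p) = p ^^ k"
  using pow_eq_iff[OF p] by simp

lemma cyc_alt:
  assumes p: "p permutes {1..n}" shows "cyc p = (\<lambda>k. p ^^ k) ` {1..ordp n p}"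
proof
  show "(\<lambda>k. p ^^ k) ` {1..ordp n p} \<subseteq> cyc p" unfolding cyc_def by auto
  show "cyc p \<subseteq> (\<lambda>k. p ^^ k) ` {1..ordp n p}"
  proof
    fix y assume "y \<in> cyc p"
    then obtain k where y: "y = p ^^ k" unfolding cyc_def by auto
    have o: "ordp n p > 0" using ord_pos[OF p] .
    show "y \<in> (\<lambda>k. p ^^ k) ` {1..ordp n p}"
    proof (cases "k mod ordp n p = 0")
      case True
      then have "y = p ^^ ordp n p" using y pow_eq_iff[OF p] by simp
      then show ?thesis using o by auto
    next
      case False
      then have "y = p ^^ (k mod ordp n p)" "k mod ordp n p \<in> {1..ordp n p}"
        using y funpow_mod_ord[OF p, of k] o by (auto simp: less_imp_le)
      then show ?thesis by blast
    qed
  qed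
qed

lemma inj_pow: 
  assumes p: "p permutes {1..n}" shows "inj_on (\<lambda>k. p ^^ k) {1..ordp n p}"
proof (rule inj_onI)
  fix a b assume ab: "a \<in> {1..ordp n p}" "b \<in> {1..ordp n p}" "p ^^ a = p ^^ b"
  then have m: "a mod ordp n p = b mod ordp n p" using pow_eq_iff[OF p] by simp
  show "a = b"
  proof (cases "a = ordp n p \<or> b = ordp n p")
    case True then show ?thesis using m ab by (auto simp: mod_if split: if_splits)
  next
    case False then show ?thesis using m ab by auto
  qed
qed

lemma card_cyc: "p permutes {1..n} \<Longrightarrow> card (cyc p) = ordp n p"
  using cyc_alt inj_pow card_image by fastforce

lemma finite_cyc: "p permutes {1..n} \<Longrightarrow> finite (cyc p)"
  using cyc_alt by simp

lemma cyc_pow_sub: "cyc ((p::nat\<Rightarrow>nat) ^^ k) \<subseteq> cyc p"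
  unfolding cyc_def by (auto simp: funpow_mult)

lemma dvd_mult_gcd_iff:
  fixes d k m :: nat assumes "k > 0" "d > 0"
  shows "d dvd k * m \<longleftrightarrow> d div gcd d k dvd m"
proof -
  have "(d div gcd d k dvd m) \<longleftrightarrow> d dvd m * gcd d k"
    using assms by (simp add: div_dvd_iff_mult)
  also have "\<dots> \<longleftrightarrow> d dvd gcd (m * d) (m * k)" by (simp add: gcd_mult_distrib_nat)
  also have "\<dots> \<longleftrightarrow> d dvd k * m" by (simp add: mult.commute)
  finally show ?thesis by simp
qed

lemma ord_unique:
  assumes q: "q permutes {1..n}" and D: "\<And>m. q ^^ m = id \<longleftrightarrow> D dvd m"
  shows "ordp n q = D"
  using ord_char[OF q] D by (metis dvd_antisym dvd_refl)

lemma ord_pow_gen: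
  assumes p: "p permutes {1..n}" and k: "k > 0"
  shows "ordp n (p ^^ k) = ordp n p div gcd (ordp n p) k"
proof (rule ord_unique[OF permutes_funpow[OF p]])
  fix m
  have "(p ^^ k) ^^ m = id \<longleftrightarrow> ordp n p dvd k * m" by (simp add: funpow_mult ord_char[OF p])
  then show "(p ^^ k) ^^ m = id \<longleftrightarrow> ordp n p div gcd (ordp n p) k dvd m"
    using dvd_mult_gcd_iff[OF k ord_pos[OF p]] by simp
qed

lemma ord_pow:
  assumes p: "p permutes {1..n}" and k: "k > 0"
  shows "ordp n (p ^^ k) = ordp n p \<longleftrightarrow> coprime k (ordp n p)"
proof -
  have o: "ordp n p > 0" using ord_pos[OF p] .
  define d where "d = ordp n p"
  define g where "g = gcd d k"
  have dg: "d div g * g = d" unfolding g_def by simp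
  have "d div g = d \<longleftrightarrow> g = 1"
  proof
    assume "d div g = d"
    then have "d * g = d * 1" using dg by simp
    then show "g = 1" using o d_def by (metis mult_left_cancel not_gr0)
  qed simp
  then have "ordp n p div gcd (ordp n p) k = ordp n p \<longleftrightarrow> gcd (ordp n p) k = 1"
    unfolding d_def g_def .
  then show ?thesis using ord_pow_gen[OF p k] by (simp add: coprime_iff_gcd_eq_1 gcd.commute)
qed

lemma cyc_pow_eq:
  assumes p: "p permutes {1..n}" and k: "k > 0"
  shows "cyc (p ^^ k) = cyc p \<longleftrightarrow> coprime k (ordp n p)"
proof -
  have pk: "(p ^^ k) permutes {1..n}" using permutes_funpow[OF p] .
  have "cyc (p ^^ k) = cyc p \<longleftrightarrow> ordp n (p ^^ k) = ordp n p"
    using card_cyc[OF p] card_cyc[OF pk] cyc_pow_sub[where p=p and k=k] finite_cyc[OF p]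
    by (metis card_subset_eq)
  then show ?thesis using ord_pow[OF p k] by simp
qed



lemma G_perm: "perm_subgroup n G \<Longrightarrow> (p::nat\<Rightarrow>nat) \<in> G \<Longrightarrow> p permutes {1..n}"
  unfolding perm_subgroup_def Sym_def by auto

lemma G_pow:
  assumes G: "perm_subgroup n G" and p: "(p::nat\<Rightarrow>nat) \<in> G" shows "p ^^ k \<in> G"
proof (induction k)
  case 0 then show ?case using G by (simp add: perm_subgroup_def id_def)
next
  case (Suc k)
  then have "p \<circ> p ^^ k \<in> G" using G p unfolding perm_subgroup_def by blast
  then show ?case by (metis funpow.simps(2))
qed

lemma cyc_sub_G: "perm_subgroup n G \<Longrightarrow> (p::nat\<Rightarrow>nat) \<in> G \<Longrightarrow> cyc p \<subseteq> G"
  unfolding cyc_def using G_pow by blast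

lemma self_in_cyc: "(p::nat\<Rightarrow>nat) \<in> cyc p"
  unfolding cyc_def by (rule range_eqI[of _ _ 1]) simp

lemma cls_alt:
  assumes G: "perm_subgroup n G" and x: "(x::nat\<Rightarrow>nat) \<in> G"
  shows "cls G x = (\<lambda>k. x ^^ k) ` totatives (ordp n x)"
proof
  have xp: "x permutes {1..n}" using G_perm[OF G x] .
  show "cls G x \<subseteq> (\<lambda>k. x ^^ k) ` totatives (ordp n x)"
  proof
    fix y assume "y \<in> cls G x"
    then have yG: "y \<in> G" and cy: "cyc y = cyc x" unfolding cls_def by auto
    then have "y \<in> cyc x" using self_in_cyc[of y] by simp
    then obtain k where k: "k \<in> {1..ordp n x}" "y = x ^^ k" using cyc_alt[OF xp] by auto
    then have "coprime k (ordp n x)" using cyc_pow_eq[OF xp, of k] cy by simp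
    then have "k \<in> totatives (ordp n x)" using k by (simp add: in_totatives_iff)
    then show "y \<in> (\<lambda>k. x ^^ k) ` totatives (ordp n x)" using k by blast
  qed
  show "(\<lambda>k. x ^^ k) ` totatives (ordp n x) \<subseteq> cls G x"
  proof
    fix y assume "y \<in> (\<lambda>k. x ^^ k) ` totatives (ordp n x)"
    then obtain k where k: "k \<in> totatives (ordp n x)" "y = x ^^ k" by auto
    then have "cyc y = cyc x" using cyc_pow_eq[OF xp, of k] by (simp add: in_totatives_iff)
    then show "y \<in> cls G x" unfolding cls_def using k G_pow[OF G x] by simp
  qed
qed

lemma card_cls:
  assumes G: "perm_subgroup n G" and x: "(x::nat\<Rightarrow>nat) \<in> G"
  shows "card (cls G x) = totient (ordp n x)"
proof -
  have xp: "x permutes {1..n}" using G_perm[OF G x] .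
  have "totatives (ordp n x) \<subseteq> {1..ordp n x}" by (auto simp: in_totatives_iff)
  then have "inj_on (\<lambda>k. x ^^ k) (totatives (ordp n x))" using inj_pow[OF xp] inj_on_subset by blast
  then show ?thesis unfolding cls_alt[OF G x] totient_def by (simp add: card_image)
qed

lemma cls_self: "(x::nat\<Rightarrow>nat) \<in> G \<Longrightarrow> x \<in> cls G x"
  unfolding cls_def by simp

lemma cls_eq_of_mem: "(y::nat\<Rightarrow>nat) \<in> cls G x \<Longrightarrow> cls G y = cls G x"
  unfolding cls_def by auto

lemma cls_sub: "cls G (x::nat\<Rightarrow>nat) \<subseteq> G"
  unfolding cls_def by auto

lemma orbit_of_pow_sub: "orbit_of ((p::nat\<Rightarrow>nat) ^^ k) i \<subseteq> orbit_of p i"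
  unfolding orbit_of_def by (auto simp: funpow_mult)

lemma type_cls:
  assumes G: "perm_subgroup n G" and x: "(x::nat\<Rightarrow>nat) \<in> G" and y: "y \<in> cls G x"
  shows "perm_type n y = perm_type n x"
proof -
  have cy: "cyc y = cyc x" using y unfolding cls_def by simp
  obtain k where k: "y = x ^^ k" using self_in_cyc[of y] cy unfolding cyc_def by auto
  obtain j where j: "x = y ^^ j" using self_in_cyc[of x] cy unfolding cyc_def by (metis imageE)
  have "orbit_of y i = orbit_of x i" for i
  proof -
    have a: "orbit_of (x ^^ k) i \<subseteq> orbit_of x i" by (rule orbit_of_pow_sub)
    have b: "orbit_of (y ^^ j) i \<subseteq> orbit_of y i" by (rule orbit_of_pow_sub)
    from a k have "orbit_of y i \<subseteq> orbit_of x i" by simp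
    moreover from b j have "orbit_of x i \<subseteq> orbit_of y i" by simp
    ultimately show ?thesis by blast
  qed
  then show ?thesis unfolding perm_type_def by simp
qed

lemma ord_cls:
  assumes G: "perm_subgroup n G" and x: "(x::nat\<Rightarrow>nat) \<in> G" and y: "y \<in> cls G x"
  shows "ordp n y = ordp n x"
  using type_cls[OF G x y] unfolding ordp_def by simp

subsection \<open>Conjugation\<close>

lemma conj_permutes:
  "(y::nat\<Rightarrow>nat) permutes S \<Longrightarrow> p permutes S \<Longrightarrow> conj_perm y p permutes S"
  unfolding conj_perm_def by (intro permutes_compose permutes_inv) auto

lemma conj_pow:
  assumes y: "(y::nat\<Rightarrow>nat) permutes S"
  shows "(conj_perm y p) ^^ k = conj_perm y (p ^^ k)"
proof (induction k)
  case 0 then show ?case unfolding conj_perm_def using permutes_inv_o(2)[OF y] by simp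
next
  case (Suc k)
  have "conj_perm y p ^^ Suc k = conj_perm y p \<circ> conj_perm y (p ^^ k)" using Suc by simp
  also have "\<dots> = inv y \<circ> p \<circ> (y \<circ> inv y) \<circ> p ^^ k \<circ> y" unfolding conj_perm_def by (simp add: o_assoc)
  also have "\<dots> = conj_perm y (p ^^ Suc k)" unfolding conj_perm_def using permutes_inv_o(1)[OF y]
    by (simp add: o_assoc)
  finally show ?case .
qed

lemma conj_inv_conj:
  assumes y: "(y::nat\<Rightarrow>nat) permutes S"
  shows "conj_perm (inv y) (conj_perm y p) = p"
  unfolding conj_perm_def permutes_inv_inv[OF y]
  by (auto simp: fun_eq_iff permutes_inverses[OF y])

lemma conj_inj:
  assumes y: "(y::nat\<Rightarrow>nat) permutes S"
  shows "conj_perm y p = conj_perm y q \<longleftrightarrow> p = q"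
  using conj_inv_conj[OF y] by metis

lemma conj_id: "(y::nat\<Rightarrow>nat) permutes S \<Longrightarrow> conj_perm y id = id"
  unfolding conj_perm_def using permutes_inv_o(2) by simp

lemma orbit_of_conj:
  assumes y: "(y::nat\<Rightarrow>nat) permutes S"
  shows "orbit_of (conj_perm y p) i = inv y ` orbit_of p (y i)"
  unfolding orbit_of_def conj_pow[OF y] by (auto simp: conj_perm_def)

lemma type_conj:
  assumes y: "(y::nat\<Rightarrow>nat) permutes {1..n}"
  shows "perm_type n (conj_perm y p) = perm_type n p"
proof -
  define A where "A = orbit_of p ` {1..n}"
  have yS: "y ` {1..n} = {1..n}" using permutes_image[OF y] .
  have "orbit_of (conj_perm y p) ` {1..n} = (\<lambda>B. inv y ` B) ` (orbit_of p ` (y ` {1..n}))"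
    using orbit_of_conj[OF y] by (auto simp: image_image)
  then have e: "orbit_of (conj_perm y p) ` {1..n} = (\<lambda>B. inv y ` B) ` A" unfolding A_def yS .
  have invi: "inj (inv y)" using permutes_inj[OF permutes_inv[OF y]] .
  have inj: "inj_on (\<lambda>B. inv y ` B) A" using invi by (simp add: inj_on_def inj_image_eq_iff)
  have "perm_type n (conj_perm y p) = image_mset card (mset_set ((\<lambda>B. inv y ` B) ` A))"
    unfolding perm_type_def e ..
  also have "\<dots> = image_mset card (image_mset (\<lambda>B. inv y ` B) (mset_set A))"
    using image_mset_mset_set[OF inj] by simp
  also have "\<dots> = image_mset (\<lambda>B. card (inv y ` B)) (mset_set A)" by (simp add: image_mset.compositionality o_def)
  also have "\<dots> = image_mset card (mset_set A)"
    using invi by (intro image_mset_cong) (simp add: card_image inj_on_subset[OF invi])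
  finally show ?thesis unfolding perm_type_def A_def .
qed



definition rcomp :: "(nat \<Rightarrow> nat) set \<Rightarrow> (nat \<Rightarrow> nat) set \<Rightarrow> (nat \<Rightarrow> nat) set set" where
  "rcomp G X = {Y \<in> rpg_vertices G. (rpg_adj G)\<^sup>*\<^sup>* X Y}"

lemma components_alt: "rpg_components G = rcomp G ` rpg_vertices G"
  unfolding rpg_components_def rcomp_def by auto

lemma norm_perm: "y \<in> normalizer n G \<Longrightarrow> y permutes {1..n}"
  unfolding normalizer_def Sym_def by auto

lemma norm_img: "y \<in> normalizer n G \<Longrightarrow> conj_perm y ` G = G"
  unfolding normalizer_def by auto

lemma conj_inj': "(y::nat\<Rightarrow>nat) permutes S \<Longrightarrow> inj (conj_perm y)"
  using conj_inj by (metis injI)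

lemma cyc_conj:
  assumes y: "(y::nat\<Rightarrow>nat) permutes S"
  shows "cyc (conj_perm y p) = conj_perm y ` cyc p"
  unfolding cyc_def conj_pow[OF y] by auto

lemma cls_conj:
  assumes y: "y \<in> normalizer n G" and x: "(x::nat\<Rightarrow>nat) \<in> G"
  shows "conj_perm y ` cls G x = cls G (conj_perm y x)"
proof -
  have yp: "y permutes {1..n}" using norm_perm[OF y] .
  have img: "conj_perm y ` G = G" using norm_img[OF y] .
  have inj: "inj (conj_perm y)" using conj_inj'[OF yp] .
  show ?thesis
  proof
    show "conj_perm y ` cls G x \<subseteq> cls G (conj_perm y x)"
    proof
      fix w assume "w \<in> conj_perm y ` cls G x"
      then obtain z where z: "z \<in> G" "cyc z = cyc x" "w = conj_perm y z" unfolding cls_def by auto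
      then have "w \<in> G" using img by blast
      moreover have "cyc w = cyc (conj_perm y x)" using z cyc_conj[OF yp] by simp
      ultimately show "w \<in> cls G (conj_perm y x)" unfolding cls_def by simp
    qed
    show "cls G (conj_perm y x) \<subseteq> conj_perm y ` cls G x"
    proof
      fix w assume w: "w \<in> cls G (conj_perm y x)"
      then have "w \<in> conj_perm y ` G" unfolding cls_def using img by simp
      then obtain z where z: "z \<in> G" "w = conj_perm y z" by auto
      have "conj_perm y ` cyc z = conj_perm y ` cyc x"
        using w z cyc_conj[OF yp] unfolding cls_def by simp
      then have "cyc z = cyc x" using inj by (simp add: inj_image_eq_iff)
      then show "w \<in> conj_perm y ` cls G x" using z unfolding cls_def by auto
    qed
  qed
qed

lemma vert_conj:
  assumes G: "perm_subgroup n G" and y: "y \<in> normalizer n G" and X: "X \<in> rpg_vertices G"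
  shows "conj_perm y ` X \<in> rpg_vertices G"
proof -
  have yp: "y permutes {1..n}" using norm_perm[OF y] .
  obtain x where x: "X = cls G x" "x \<in> G" "x \<noteq> id" using X unfolding rpg_vertices_def by auto
  have "conj_perm y x \<in> G" using norm_img[OF y] x by blast
  moreover have "conj_perm y x \<noteq> id" using x conj_inj[OF yp, of x id] conj_id[OF yp] by simp
  moreover have "conj_perm y ` X = cls G (conj_perm y x)" using cls_conj[OF y x(2)] x by simp
  ultimately show ?thesis unfolding rpg_vertices_def by auto
qed

lemma adj_conj:
  assumes G: "perm_subgroup n G" and y: "y \<in> normalizer n G" and a: "rpg_adj G X Y"
  shows "rpg_adj G (conj_perm y ` X) (conj_perm y ` Y)"
proof -
  have yp: "y permutes {1..n}" using norm_perm[OF y] .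
  have inj: "inj (conj_perm y)" using conj_inj'[OF yp] .
  from a have XV: "X \<in> rpg_vertices G" and YV: "Y \<in> rpg_vertices G" and ne: "X \<noteq> Y"
    unfolding rpg_adj_def by auto
  from a obtain x z k where xz: "x \<in> X" "z \<in> Y" "k > 0" "z = x ^^ k \<or> x = z ^^ k"
    unfolding rpg_adj_def by auto
  have "conj_perm y z = conj_perm y x ^^ k \<or> conj_perm y x = conj_perm y z ^^ k"
    using xz(4) conj_pow[OF yp] by auto
  moreover have "conj_perm y ` X \<noteq> conj_perm y ` Y" using ne inj by (simp add: inj_image_eq_iff)
  ultimately show ?thesis unfolding rpg_adj_def
    using vert_conj[OF G y XV] vert_conj[OF G y YV] xz by blast
qed

lemma rtrancl_conj:
  assumes G: "perm_subgroup n G" and y: "y \<in> normalizer n G" and a: "(rpg_adj G)\<^sup>*\<^sup>* X Y"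
  shows "(rpg_adj G)\<^sup>*\<^sup>* (conj_perm y ` X) (conj_perm y ` Y)"
  using a
proof (induction rule: rtranclp_induct)
  case base then show ?case by simp
next
  case (step Y Z)
  then show ?case using adj_conj[OF G y step(2)] by (meson rtranclp.rtrancl_into_rtrancl)
qed

lemma norm_inv:
  assumes y: "y \<in> normalizer n G" shows "inv y \<in> normalizer n G"
proof -
  have yp: "y permutes {1..n}" using norm_perm[OF y] .
  have "conj_perm (inv y) ` G = conj_perm (inv y) ` conj_perm y ` G" using norm_img[OF y] by simp
  also have "\<dots> = G" by (simp add: image_image conj_inv_conj[OF yp])
  finally show ?thesis unfolding normalizer_def Sym_def using permutes_inv[OF yp] by simp
qed

lemma conj_img_inv:
  assumes y: "(y::nat\<Rightarrow>nat) permutes S"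
  shows "conj_perm (inv y) ` conj_perm y ` X = X"
  by (simp add: image_image conj_inv_conj[OF y])

lemma hasT_conj:
  assumes G: "perm_subgroup n G" and y: "y \<in> normalizer n G" and Y: "Y \<subseteq> G"
  shows "vertex_has_type n T (conj_perm y ` Y) \<longleftrightarrow> vertex_has_type n T Y"
  using type_conj[OF norm_perm[OF y]] unfolding vertex_has_type_def by auto

lemma vert_sub: "X \<in> rpg_vertices G \<Longrightarrow> X \<subseteq> G"
  unfolding rpg_vertices_def using cls_sub by auto

lemma rcomp_conj:
  assumes G: "perm_subgroup n G" and y: "y \<in> normalizer n G" and X: "X \<in> rpg_vertices G"
  shows "(\<lambda>Z. conj_perm y ` Z) ` rcomp G X = rcomp G (conj_perm y ` X)"
proof
  show "(\<lambda>Z. conj_perm y ` Z) ` rcomp G X \<subseteq> rcomp G (conj_perm y ` X)"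
    unfolding rcomp_def using vert_conj[OF G y] rtrancl_conj[OF G y] by auto
  show "rcomp G (conj_perm y ` X) \<subseteq> (\<lambda>Z. conj_perm y ` Z) ` rcomp G X"
  proof
    fix Z assume Z: "Z \<in> rcomp G (conj_perm y ` X)"
    have yp: "y permutes {1..n}" using norm_perm[OF y] .
    have yi: "inv y \<in> normalizer n G" using norm_inv[OF y] .
    define W where "W = conj_perm (inv y) ` Z"
    have "W \<in> rpg_vertices G" unfolding W_def using vert_conj[OF G yi] Z unfolding rcomp_def by auto
    moreover have "(rpg_adj G)\<^sup>*\<^sup>* X W"
      using rtrancl_conj[OF G yi, of "conj_perm y ` X" Z] Z conj_img_inv[OF yp, of X]
      unfolding rcomp_def W_def by auto
    moreover have "Z = conj_perm y ` W"
      unfolding W_def using conj_img_inv[OF permutes_inv[OF yp], of Z] permutes_inv_inv[OF yp] by simp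
    ultimately show "Z \<in> (\<lambda>Z. conj_perm y ` Z) ` rcomp G X" unfolding rcomp_def by auto
  qed
qed

lemma kC_conj:
  assumes G: "perm_subgroup n G" and y: "y \<in> normalizer n G" and X: "X \<in> rpg_vertices G"
  shows "kC n (rcomp G (conj_perm y ` X)) T = kC n (rcomp G X) T"
proof -
  have yp: "y permutes {1..n}" using norm_perm[OF y] .
  have inj: "inj (conj_perm y)" using conj_inj'[OF yp] .
  have injI: "inj_on (\<lambda>Z. conj_perm y ` Z) A" for A using inj by (simp add: inj_on_def inj_image_eq_iff)
  have cs: "Z \<in> rcomp G X \<Longrightarrow> Z \<subseteq> G" for Z unfolding rcomp_def using vert_sub by auto
  have "{Z \<in> rcomp G (conj_perm y ` X). vertex_has_type n T Z}
      = (\<lambda>Z. conj_perm y ` Z) ` {Z \<in> rcomp G X. vertex_has_type n T Z}"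
    unfolding rcomp_conj[OF G y X, symmetric] using hasT_conj[OF G y] cs by auto
  then show ?thesis unfolding kC_def using card_image[OF injI] by simp
qed

subsection \<open>Components\<close>

lemma adj_sym: "rpg_adj G X Y \<Longrightarrow> rpg_adj G Y X"
  unfolding rpg_adj_def by blast

lemma rtr_sym: "(rpg_adj G)\<^sup>*\<^sup>* X Y \<Longrightarrow> (rpg_adj G)\<^sup>*\<^sup>* Y X"
proof (induction rule: rtranclp_induct)
  case base then show ?case by simp
next
  case (step Y Z) then show ?case using adj_sym by (metis converse_rtranclp_into_rtranclp)
qed

lemma rcomp_eq: "Y \<in> rcomp G X \<Longrightarrow> rcomp G Y = rcomp G X"
  unfolding rcomp_def using rtr_sym by (auto intro: rtranclp_trans)

lemma rcomp_self: "X \<in> rpg_vertices G \<Longrightarrow> X \<in> rcomp G X"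
  unfolding rcomp_def by simp

lemma rcomp_sub: "rcomp G X \<subseteq> rpg_vertices G"
  unfolding rcomp_def by auto

lemma finite_G: "perm_subgroup n G \<Longrightarrow> finite G"
  unfolding perm_subgroup_def Sym_def using finite_permutations[of "{1..n}"] finite_subset by auto

lemma finite_V: "perm_subgroup n G \<Longrightarrow> finite (rpg_vertices G)"
proof -
  assume G: "perm_subgroup n G"
  have "rpg_vertices G \<subseteq> Pow G" using vert_sub by auto
  then show ?thesis using finite_G[OF G] finite_subset by blast
qed

lemma finite_comps: "perm_subgroup n G \<Longrightarrow> finite (rpg_components G)"
  using finite_V components_alt by simp

lemma comps_disjoint:
  assumes "C1 \<in> rpg_components G" "C2 \<in> rpg_components G" "C1 \<noteq> C2"
  shows "C1 \<inter> C2 = {}"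
  using assms rcomp_eq unfolding components_alt by (metis disjoint_iff imageE)

lemma count_VT:
  assumes G: "perm_subgroup n G"
  shows "card {X \<in> rpg_vertices G. vertex_has_type n T X}
       = (\<Sum>C \<in> {C'\<in>rpg_components G. \<exists>X\<in>C'. vertex_has_type n T X}. kC n C T)"
proof -
  let ?CT = "{C'\<in>rpg_components G. \<exists>X\<in>C'. vertex_has_type n T X}"
  have "{X \<in> rpg_vertices G. vertex_has_type n T X} = (\<Union>C\<in>?CT. {X \<in> C. vertex_has_type n T X})"
  proof
    show "{X \<in> rpg_vertices G. vertex_has_type n T X} \<subseteq> (\<Union>C\<in>?CT. {X \<in> C. vertex_has_type n T X})"
    proof
      fix X assume X: "X \<in> {X \<in> rpg_vertices G. vertex_has_type n T X}"
      then have "rcomp G X \<in> ?CT" "X \<in> rcomp G X" using rcomp_self components_alt by auto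
      then show "X \<in> (\<Union>C\<in>?CT. {X \<in> C. vertex_has_type n T X})" using X by auto
    qed
    show "(\<Union>C\<in>?CT. {X \<in> C. vertex_has_type n T X}) \<subseteq> {X \<in> rpg_vertices G. vertex_has_type n T X}"
      using rcomp_sub components_alt by fastforce
  qed
  moreover have "card (\<Union>C\<in>?CT. {X \<in> C. vertex_has_type n T X}) = (\<Sum>C\<in>?CT. card {X \<in> C. vertex_has_type n T X})"
  proof (rule card_UN_disjoint)
    show "finite ?CT" using finite_comps[OF G] by simp
    show "\<forall>C\<in>?CT. finite {X \<in> C. vertex_has_type n T X}"
      using finite_V[OF G] rcomp_sub components_alt by (auto intro: finite_subset)
    show "\<forall>C1\<in>?CT. \<forall>C2\<in>?CT. C1 \<noteq> C2 \<longrightarrow> {X \<in> C1. vertex_has_type n T X} \<inter> {X \<in> C2. vertex_has_type n T X} = {}"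
      using comps_disjoint by blast
  qed
  ultimately show ?thesis unfolding kC_def by simp
qed



lemma mset_bij:
  assumes "finite B" "finite A" "image_mset g (mset_set A) = image_mset h (mset_set B)"
  shows "\<exists>f. bij_betw f B A \<and> (\<forall>b\<in>B. g (f b) = h b)"
  using assms
proof (induction B arbitrary: A rule: finite_induct)
  case empty
  then have "A = {}" by (metis image_mset_is_empty_iff mset_set.empty mset_set_empty_iff)
  then show ?case by (auto simp: bij_betw_def)
next
  case (insert b B A)
  have "h b \<in># image_mset g (mset_set A)" using insert by simp
  then obtain a where a: "a \<in> A" "g a = h b" by (auto simp: insert(4))
  have Aa: "A = insert a (A - {a})" using a by auto
  have "add_mset (g a) (image_mset g (mset_set (A - {a}))) = add_mset (h b) (image_mset h (mset_set B))"
    using insert(5) insert(1,2,4) Aa by (metis image_mset_add_mset mset_set.insert finite_Diff Diff_iff insertI1 mset_set.insert_remove)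
  then have "image_mset g (mset_set (A - {a})) = image_mset h (mset_set B)" using a by simp
  then obtain f where f: "bij_betw f B (A - {a})" "\<forall>b\<in>B. g (f b) = h b"
    using insert.IH[of "A - {a}"] insert(4) by auto
  define f' where "f' = f(b := a)"
  have "bij_betw f' B (A - {a})" using f(1) insert(2) unfolding f'_def
    by (metis bij_betw_cong fun_upd_other)
  moreover have "bij_betw f' {b} {a}" unfolding f'_def by (simp add: bij_betw_def)
  ultimately have "bij_betw f' (B \<union> {b}) ((A - {a}) \<union> {a})" by (intro bij_betw_combine) auto
  moreover have "B \<union> {b} = insert b B" "(A - {a}) \<union> {a} = A" using a by auto
  ultimately have "bij_betw f' (insert b B) A" by simp
  moreover have "\<forall>c\<in>insert b B. g (f' c) = h c" using f(2) a insert(2) unfolding f'_def by auto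
  ultimately show ?case by blast
qed

lemma conj_same_type:
  assumes p: "(p::nat\<Rightarrow>nat) permutes {1..n}" and q: "q permutes {1..n}"
    and T: "perm_type n p = perm_type n q"
  shows "\<exists>x\<in>Sym n. q = conj_perm x p"
proof -
  define S where "S = {1..n}"
  have pS: "p permutes S" and qS: "q permutes S" using p q S_def by auto
  have pp: "permutation p" and qq: "permutation q" using permutation_of_permutes p q by auto
  define Op where "Op = orbit_of p ` S"
  define Oq where "Oq = orbit_of q ` S"
  have "image_mset card (mset_set Op) = image_mset card (mset_set Oq)"
    using T unfolding perm_type_def Op_def Oq_def S_def .
  moreover have "finite Op" "finite Oq" unfolding Op_def Oq_def S_def by auto
  ultimately obtain f where f: "bij_betw f Oq Op" "\<forall>B\<in>Oq. card (f B) = card B"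
    using mset_bij[of Oq Op card card] by auto
  define rep where "rep = (\<lambda>B::nat set. SOME r. r \<in> B)"
  have repq: "rep B \<in> B" "orbit_of q (rep B) = B" if BB: "B \<in> Oq" for B
  proof -
    obtain i where i: "B = orbit_of q i" using BB unfolding Oq_def by auto
    then have "i \<in> B" using orbit_of_self by simp
    then show r: "rep B \<in> B" unfolding rep_def by (metis someI_ex)
    have "rep B \<in> orbit_of q i" using r i by simp
    from orbit_of_eq[OF qq this] i show "orbit_of q (rep B) = B" by simp
  qed
  have repp: "rep D \<in> D" "orbit_of p (rep D) = D" "rep D \<in> S" if DD: "D \<in> Op" for D
  proof -
    obtain i where i: "D = orbit_of p i" "i \<in> S" using DD unfolding Op_def by auto
    then have "i \<in> D" using orbit_of_self by simp
    then show r: "rep D \<in> D" unfolding rep_def by (metis someI_ex)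
    have "rep D \<in> orbit_of p i" using r i by simp
    from orbit_of_eq[OF pp this] i show "orbit_of p (rep D) = D" by simp
    show "rep D \<in> S" using r i orbit_of_permutes_sub[OF pS] by blast
  qed
  define k where "k j = funpow_dist q (rep (orbit_of q j)) j" for j
  define x where "x j = (if j \<in> S then (p ^^ k j) (rep (f (orbit_of q j))) else j)" for j
  have Bq: "orbit_of q j \<in> Oq" if "j \<in> S" for j using that unfolding Oq_def by auto
  have fB: "f (orbit_of q j) \<in> Op" if "j \<in> S" for j using Bq[OF that] f(1) bij_betwE by blast
  have kprop: "(q ^^ k j) (rep (orbit_of q j)) = j" if "j \<in> S" for j
  proof -
    have "j \<in> orbit_of q (rep (orbit_of q j))" using repq(2)[OF Bq[OF that]] orbit_of_self by simp
    then have "j \<in> orbit q (rep (orbit_of q j))" using orbit_of_eq_orbit[OF qq] by simp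
    then show ?thesis unfolding k_def by (rule funpow_dist_prop)
  qed
  have cardeq: "card (orbit_of p (rep (f (orbit_of q j)))) = card (orbit_of q (rep (orbit_of q j)))"
    if "j \<in> S" for j
    using repp(2)[OF fB[OF that]] repq(2)[OF Bq[OF that]] f(2) Bq[OF that] by simp
  have qjS: "q j \<in> S" if "j \<in> S" for j using permutes_in_image[OF qS] that by simp
  have Bqj: "orbit_of q (q j) = orbit_of q j" for j
  proof -
    have "q j \<in> orbit_of q j" unfolding orbit_of_def by (rule range_eqI[of _ _ 1]) simp
    then show ?thesis by (rule orbit_of_eq[OF qq])
  qed
  have comm: "x (q j) = p (x j)" if j: "j \<in> S" for j
  proof -
    define r where "r = rep (orbit_of q j)"
    define r' where "r' = rep (f (orbit_of q j))"
    define d where "d = card (orbit_of q r)"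
    have "(q ^^ k (q j)) r = q j" using kprop[OF qjS[OF j]] Bqj r_def by simp
    also have "\<dots> = (q ^^ Suc (k j)) r" using kprop[OF j] r_def by simp
    finally have "k (q j) mod d = Suc (k j) mod d"
      using perm_mod_eq[OF qq, where a="k (q j)" and i=r and b="Suc (k j)"] d_def by blast
    moreover have "card (orbit_of p r') = d" using cardeq[OF j] r_def r'_def d_def by simp
    ultimately have "(p ^^ k (q j)) r' = (p ^^ Suc (k j)) r'"
      using perm_mod_eq[OF pp, where a="k (q j)" and i=r' and b="Suc (k j)"] by simp
    then show ?thesis unfolding x_def using j qjS[OF j] Bqj r'_def by simp
  qed
  have xS: "x j \<in> S" if j: "j \<in> S" for j
  proof -
    have "x j \<in> orbit_of p (rep (f (orbit_of q j)))" unfolding x_def using j orbit_of_funpow by simp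
    then show ?thesis using orbit_of_permutes_sub[OF pS repp(3)[OF fB[OF j]]] by blast
  qed
  have xinj: "inj_on x S"
  proof (rule inj_onI)
    fix j1 j2 assume j: "j1 \<in> S" "j2 \<in> S" "x j1 = x j2"
    have oe: "orbit_of p (x j) = f (orbit_of q j)" if jj: "j \<in> S" for j
    proof -
      have "x j \<in> orbit_of p (rep (f (orbit_of q j)))" unfolding x_def using jj orbit_of_funpow by simp
      then have "orbit_of p (x j) = orbit_of p (rep (f (orbit_of q j)))" by (rule orbit_of_eq[OF pp])
      with repp(2)[OF fB[OF jj]] show ?thesis by simp
    qed
    have "f (orbit_of q j1) = f (orbit_of q j2)" using oe[OF j(1)] oe[OF j(2)] j(3) by metis
    moreover have "inj_on f Oq" using f(1) unfolding bij_betw_def by simp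
    ultimately have B: "orbit_of q j1 = orbit_of q j2" using Bq[OF j(1)] Bq[OF j(2)] inj_onD by metis
    define r where "r = rep (orbit_of q j1)"
    define r' where "r' = rep (f (orbit_of q j1))"
    define d where "d = card (orbit_of q r)"
    have "(p ^^ k j1) r' = (p ^^ k j2) r'" using j B unfolding x_def r'_def by simp
    moreover have "card (orbit_of p r') = d" using cardeq[OF j(1)] r_def r'_def d_def by simp
    ultimately have "k j1 mod d = k j2 mod d"
      using perm_mod_eq[OF pp, where a="k j1" and i=r' and b="k j2"] by simp
    then have "(q ^^ k j1) r = (q ^^ k j2) r"
      using perm_mod_eq[OF qq, where a="k j1" and i=r and b="k j2"] d_def by blast
    moreover have "(q ^^ k j1) r = j1" using kprop[OF j(1)] r_def by simp
    moreover have "(q ^^ k j2) r = j2" using kprop[OF j(2)] B r_def by simp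
    ultimately show "j1 = j2" by simp
  qed
  have "x ` S = S"
  proof (rule endo_inj_surj)
    show "finite S" unfolding S_def by simp
    show "x ` S \<subseteq> S" using xS by blast
    show "inj_on x S" by (rule xinj)
  qed
  then have xb: "bij_betw x S S" using xinj by (simp add: bij_betw_def)
  have xperm: "x permutes S" by (rule bij_imp_permutes[OF xb]) (simp add: x_def)
  have "x \<circ> q = p \<circ> x"
  proof
    fix j show "(x \<circ> q) j = (p \<circ> x) j"
    proof (cases "j \<in> S")
      case True then show ?thesis using comm by simp
    next
      case False then show ?thesis using permutes_not_in[OF pS False] permutes_not_in[OF qS False]
        by (simp add: x_def)
    qed
  qed
  then have "conj_perm x p = inv x \<circ> (x \<circ> q)" unfolding conj_perm_def by (simp add: comp_assoc)
  also have "\<dots> = q" using permutes_inv_o(2)[OF xperm] by (simp add: comp_assoc[symmetric])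
  finally have "conj_perm x p = q" .
  moreover have "x \<in> Sym n" using xperm S_def Sym_def by simp
  ultimately show ?thesis by auto
qed



lemma img_mset_UN:
  assumes "finite I" "\<forall>i\<in>I. finite (A i)" "\<forall>i\<in>I. \<forall>j\<in>I. i \<noteq> j \<longrightarrow> A i \<inter> A j = {}"
  shows "image_mset h (mset_set (\<Union>i\<in>I. A i)) = (\<Sum>i\<in>I. image_mset h (mset_set (A i)))"
  using assms
proof (induction I rule: finite_induct)
  case empty then show ?case by simp
next
  case (insert i I)
  have "A i \<inter> A j = {}" if jI: "j \<in> I" for j
  proof -
    have "i \<noteq> j" using jI insert(2) by auto
    then show ?thesis using insert(5) jI by blast
  qed
  then have d: "A i \<inter> (\<Union>j\<in>I. A j) = {}" by blast
  have f: "finite (A i)" "finite (\<Union>j\<in>I. A j)" using insert by auto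
  have "mset_set (\<Union>j\<in>insert i I. A j) = mset_set (A i) + mset_set (\<Union>j\<in>I. A j)"
    using mset_set_Union[OF f d] by simp
  then show ?case using insert by simp
qed

lemma card_orbit_pow:
  assumes p: "(p::nat\<Rightarrow>nat) permutes {1..n}" and a: "a > 0"
  shows "card (orbit_of (p ^^ a) i) = card (orbit_of p i) div gcd (card (orbit_of p i)) a"
proof -
  have pp: "permutation p" using permutation_of_permutes[OF p] .
  have pa: "permutation (p ^^ a)" using permutation_of_permutes[OF permutes_funpow[OF p]] .
  define d where "d = card (orbit_of p i)"
  have d0: "d > 0" using card_orbit_pos[OF pp] d_def by simp
  have "card (orbit_of (p ^^ a) i) dvd k \<longleftrightarrow> d div gcd d a dvd k" for k
  proof -
    have "card (orbit_of (p ^^ a) i) dvd k \<longleftrightarrow> ((p ^^ a) ^^ k) i = i" using perm_period[OF pa] by simp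
    also have "\<dots> \<longleftrightarrow> (p ^^ (a * k)) i = i" by (simp add: funpow_mult)
    also have "\<dots> \<longleftrightarrow> d dvd a * k" using perm_period[OF pp] d_def by simp
    also have "\<dots> \<longleftrightarrow> d div gcd d a dvd k" using dvd_mult_gcd_iff[OF a d0] by simp
    finally show ?thesis .
  qed
  then show ?thesis unfolding d_def[symmetric] by (metis dvd_antisym dvd_refl)
qed

lemma orbit_of_disj:
  assumes f: "permutation f" and z: "z \<in> orbit_of f i" "z \<in> orbit_of f j"
  shows "orbit_of f i = orbit_of f j"
  using orbit_of_eq[OF f z(1)] orbit_of_eq[OF f z(2)] by simp

lemma orbit_of_pow_in: "orbit_of ((p::nat\<Rightarrow>nat) ^^ a) i \<subseteq> orbit_of p i"
  by (rule orbit_of_pow_sub)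

lemma type_pow_lemma:
  assumes p: "(p::nat\<Rightarrow>nat) permutes {1..n}" and a: "a > 0"
  shows "perm_type n (p ^^ a) = type_pow (perm_type n p) a"
proof -
  define S where "S = {1..n}"
  have pS: "p permutes S" using p S_def by simp
  have pp: "permutation p" using permutation_of_permutes[OF p] .
  have pa: "permutation (p ^^ a)" using permutation_of_permutes[OF permutes_funpow[OF p]] .
  define Op where "Op = orbit_of p ` S"
  define F where "F m = replicate_mset (gcd a m) (m div gcd a m)" for m
  define Oa where "Oa B = orbit_of (p ^^ a) ` B" for B
  have finOp: "finite Op" unfolding Op_def S_def by simp
  have BS: "B \<subseteq> S" if "B \<in> Op" for B using that orbit_of_permutes_sub[OF pS] unfolding Op_def by auto
  have finB: "finite B" if "B \<in> Op" for B using BS[OF that] S_def finite_subset by auto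
  have UOp: "(\<Union>B\<in>Op. Oa B) = orbit_of (p ^^ a) ` S"
  proof -
    have "(\<Union>B\<in>Op. B) = S"
      using BS orbit_of_self unfolding Op_def by blast
    then show ?thesis unfolding Oa_def by blast
  qed
  have disj: "\<forall>B1\<in>Op. \<forall>B2\<in>Op. B1 \<noteq> B2 \<longrightarrow> Oa B1 \<inter> Oa B2 = {}"
  proof (intro ballI impI)
    fix B1 B2 assume B: "B1 \<in> Op" "B2 \<in> Op" "B1 \<noteq> B2"
    show "Oa B1 \<inter> Oa B2 = {}"
    proof (rule ccontr)
      assume "Oa B1 \<inter> Oa B2 \<noteq> {}"
      then obtain i1 i2 where i: "i1 \<in> B1" "i2 \<in> B2" "orbit_of (p ^^ a) i1 = orbit_of (p ^^ a) i2"
        unfolding Oa_def by blast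
      obtain j1 j2 where j: "B1 = orbit_of p j1" "B2 = orbit_of p j2" using B unfolding Op_def by auto
      have "i2 \<in> orbit_of (p ^^ a) i1" using i(3) orbit_of_self by metis
      then have "i2 \<in> orbit_of p i1" using orbit_of_pow_in by blast
      then have "orbit_of p i2 = orbit_of p i1" by (rule orbit_of_eq[OF pp])
      moreover have "orbit_of p i1 = B1" using orbit_of_eq[OF pp] i(1) j(1) by blast
      moreover have "orbit_of p i2 = B2" using orbit_of_eq[OF pp] i(2) j(2) by blast
      ultimately show False using B(3) by simp
    qed
  qed
  have blk: "image_mset card (mset_set (Oa B)) = F (card B)" if B: "B \<in> Op" for B
  proof -
    obtain i0 where i0: "B = orbit_of p i0" using B unfolding Op_def by auto
    define m where "m = card B"
    define g where "g = gcd a m"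
    have m0: "m > 0" using card_orbit_pos[OF pp] i0 m_def by simp
    have cB: "card C = m div g" if C: "C \<in> Oa B" for C
    proof -
      obtain i where i: "i \<in> B" "C = orbit_of (p ^^ a) i" using C unfolding Oa_def by auto
      have "orbit_of p i = B" using orbit_of_eq[OF pp] i(1) i0 by blast
      then show ?thesis using card_orbit_pow[OF p a, of i] i m_def g_def by (simp add: gcd.commute)
    qed
    have finOa: "finite (Oa B)" unfolding Oa_def using finB[OF B] by simp
    have "(m div g) * card (Oa B) = card (\<Union>(Oa B))"
    proof (rule card_partition)
      show "finite (Oa B)" by (rule finOa)
      show "finite (\<Union>(Oa B))" unfolding Oa_def using finB[OF B] orbit_of_pow_in i0 orbit_of_eq[OF pp]
        by (metis (no_types, lifting) UN_least finite_subset)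
      show "\<And>c. c \<in> Oa B \<Longrightarrow> card c = m div g" using cB by blast
      show "\<And>c1 c2. c1 \<in> Oa B \<Longrightarrow> c2 \<in> Oa B \<Longrightarrow> c1 \<noteq> c2 \<Longrightarrow> c1 \<inter> c2 = {}"
        unfolding Oa_def using orbit_of_disj[OF pa] by blast
    qed
    moreover have "\<Union>(Oa B) = B"
    proof
      show "\<Union>(Oa B) \<subseteq> B" unfolding Oa_def using orbit_of_pow_in orbit_of_eq[OF pp] i0 by blast
      show "B \<subseteq> \<Union>(Oa B)" unfolding Oa_def using orbit_of_self by blast
    qed
    ultimately have e: "(m div g) * card (Oa B) = m" using m_def by simp
    have "g dvd m" "g > 0" using m0 g_def by auto
    then have e2: "(m div g) * g = m" by simp
    have "m div g > 0" using e m0 by (metis gr0I mult_is_0)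
    then have "card (Oa B) = g" using e e2 by (metis mult_left_cancel not_gr0)
    have "image_mset card (mset_set (Oa B)) = image_mset (\<lambda>_. m div g) (mset_set (Oa B))"
      using cB finOa by (intro image_mset_cong) simp
    also have "\<dots> = replicate_mset g (m div g)"
      using \<open>card (Oa B) = g\<close> by (simp add: image_mset_const_eq)
    finally show ?thesis unfolding F_def m_def g_def .
  qed
  have "perm_type n (p ^^ a) = image_mset card (mset_set (\<Union>B\<in>Op. Oa B))"
    unfolding perm_type_def UOp S_def ..
  also have "\<dots> = (\<Sum>B\<in>Op. image_mset card (mset_set (Oa B)))"
    by (rule img_mset_UN[OF finOp _ disj]) (auto simp: Oa_def finB)
  also have "\<dots> = (\<Sum>B\<in>Op. F (card B))" using blk by simp
  also have "\<dots> = \<Sum>\<^sub># (image_mset (\<lambda>B. F (card B)) (mset_set Op))" by (rule sum_unfold_sum_mset)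
  also have "\<dots> = type_pow (perm_type n p) a"
    unfolding type_pow_def perm_type_def Op_def S_def F_def by (simp add: image_mset.compositionality o_def)
  finally show ?thesis .
qed

lemma ord_one_iff:
  assumes p: "(p::nat\<Rightarrow>nat) permutes {1..n}" shows "ordp n p = 1 \<longleftrightarrow> p = id"
  using ord_char[OF p, of 1] by simp

lemma vert_type_all:
  assumes G: "perm_subgroup n G" and X: "X \<in> rpg_vertices G" and p: "p \<in> X" and z: "z \<in> X"
  shows "perm_type n z = perm_type n p"
proof -
  obtain x where x: "X = cls G x" "x \<in> G" using X unfolding rpg_vertices_def by auto
  show ?thesis using type_cls[OF G x(2)] p z x by metis
qed

lemma vert_is_cls:
  assumes X: "X \<in> rpg_vertices G" and p: "p \<in> X"
  shows "X = cls G p" "p \<in> G" "p \<noteq> id"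
proof -
  obtain x where x: "X = cls G x" "x \<in> G" "x \<noteq> id" using X unfolding rpg_vertices_def by auto
  show "X = cls G p" using cls_eq_of_mem p x by metis
  show "p \<in> G" using p x cls_sub by blast
  have "cyc p = cyc x" using p x unfolding cls_def by auto
  moreover have "cyc (id::nat\<Rightarrow>nat) = {id}" unfolding cyc_def by auto
  ultimately show "p \<noteq> id" using x self_in_cyc[of x] by auto
qed

lemma mu_count:
  assumes G: "perm_subgroup n G" and T: "T \<in> types0 n G"
  shows "mu n G T = card {X \<in> rpg_vertices G. vertex_has_type n T X} * totient (type_order T)"
proof -
  let ?VT = "{X \<in> rpg_vertices G. vertex_has_type n T X}"
  obtain q where q: "q \<in> G" "q \<noteq> id" "perm_type n q = T" using T unfolding types0_def by auto
  have qp: "q permutes {1..n}" using G_perm[OF G q(1)] .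
  have Tord: "type_order T \<noteq> 1" using ord_one_iff[OF qp] q unfolding ordp_def by simp
  have "{p \<in> G. perm_type n p = T} = (\<Union>X\<in>?VT. X)"
  proof
    show "{p \<in> G. perm_type n p = T} \<subseteq> (\<Union>X\<in>?VT. X)"
    proof
      fix p assume p: "p \<in> {p \<in> G. perm_type n p = T}"
      have pp: "p permutes {1..n}" using G_perm[OF G] p by auto
      have "p \<noteq> id" using ord_one_iff[OF pp] p Tord unfolding ordp_def by auto
      then have "cls G p \<in> ?VT" using p cls_self[of p G] unfolding rpg_vertices_def vertex_has_type_def by auto
      then show "p \<in> (\<Union>X\<in>?VT. X)" using cls_self[of p G] p by auto
    qed
    show "(\<Union>X\<in>?VT. X) \<subseteq> {p \<in> G. perm_type n p = T}"
    proof
      fix z assume "z \<in> (\<Union>X\<in>?VT. X)"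
      then obtain X p where X: "X \<in> rpg_vertices G" "p \<in> X" "perm_type n p = T" "z \<in> X"
        unfolding vertex_has_type_def by auto
      then show "z \<in> {p \<in> G. perm_type n p = T}"
        using vert_type_all[OF G X(1,2,4)] vert_sub[OF X(1)] by auto
    qed
  qed
  moreover have "card (\<Union>X\<in>?VT. X) = (\<Sum>X\<in>?VT. card X)"
  proof (rule card_UN_disjoint)
    show "finite ?VT" using finite_V[OF G] by simp
    show "\<forall>X\<in>?VT. finite X" using finite_G[OF G] vert_sub finite_subset by blast
    show "\<forall>X1\<in>?VT. \<forall>X2\<in>?VT. X1 \<noteq> X2 \<longrightarrow> X1 \<inter> X2 = {}"
      using vert_is_cls(1) by blast
  qed
  moreover have "card X = totient (type_order T)" if "X \<in> ?VT" for X
  proof -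
    from that have XX: "X \<in> rpg_vertices G" "vertex_has_type n T X" by auto
    then obtain p where p: "X \<in> rpg_vertices G" "p \<in> X" "perm_type n p = T"
      unfolding vertex_has_type_def by auto
    show ?thesis using card_cls[OF G vert_is_cls(2)[OF p(1,2)]] vert_is_cls(1)[OF p(1,2)] p(3)
      unfolding ordp_def by simp
  qed
  ultimately show ?thesis unfolding mu_def by simp
qed

lemma kC_transitive:
  assumes G: "perm_subgroup n G" and F: "fusion_controlled n G"
    and C: "C \<in> rpg_components G" "\<exists>X\<in>C. vertex_has_type n T X"
    and C': "C' \<in> rpg_components G" "\<exists>X\<in>C'. vertex_has_type n T X"
  shows "kC n C' T = kC n C T"
proof -
  obtain X0 p where X0: "X0 \<in> C" "p \<in> X0" "perm_type n p = T"
    using C unfolding vertex_has_type_def by auto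
  obtain X1 p' where X1: "X1 \<in> C'" "p' \<in> X1" "perm_type n p' = T"
    using C' unfolding vertex_has_type_def by auto
  have X0V: "X0 \<in> rpg_vertices G" and X1V: "X1 \<in> rpg_vertices G"
    using X0 X1 C C' rcomp_sub components_alt by auto
  have CX0: "C = rcomp G X0" using C X0 rcomp_eq components_alt by auto
  have CX1: "C' = rcomp G X1" using C' X1 rcomp_eq components_alt by auto
  have pG: "p \<in> G" "p' \<in> G" using vert_is_cls(2) X0 X1 X0V X1V by auto
  obtain x where x: "x \<in> Sym n" "p' = conj_perm x p"
    using conj_same_type[OF G_perm[OF G pG(1)] G_perm[OF G pG(2)]] X0 X1 by auto
  obtain y where y: "y \<in> normalizer n G" "p' = conj_perm y p"
    using F pG x unfolding fusion_controlled_def by metis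
  have "conj_perm y ` X0 = X1"
    using cls_conj[OF y(1) pG(1)] vert_is_cls(1)[OF X0V X0(2)] vert_is_cls(1)[OF X1V X1(2)] y(2) by simp
  then show ?thesis using kC_conj[OF G y(1) X0V, of T] CX0 CX1 by simp
qed

lemma cyc_eq_same_ord:
  assumes p: "(p::nat\<Rightarrow>nat) permutes {1..n}" and o: "ordp n (p ^^ k) = ordp n p"
  shows "cyc (p ^^ k) = cyc p"
  using card_cyc[OF p] card_cyc[OF permutes_funpow[OF p]] cyc_pow_sub[where p=p and k=k] finite_cyc[OF p] o
  by (metis card_subset_eq)

lemma isolated_no_adj:
  assumes G: "perm_subgroup n G" and I: "type_isolated n G T"
    and X: "X \<in> rpg_vertices G" "vertex_has_type n T X"
  shows "\<not> rpg_adj G X Y"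
proof
  assume a: "rpg_adj G X Y"
  then have YV: "Y \<in> rpg_vertices G" and ne: "X \<noteq> Y" unfolding rpg_adj_def by auto
  from a obtain x z k where xz: "x \<in> X" "z \<in> Y" "k > 0" "z = x ^^ k \<or> x = z ^^ k"
    unfolding rpg_adj_def by auto
  have xT: "perm_type n x = T" using X vert_type_all[OF G X(1)] xz(1) unfolding vertex_has_type_def by metis
  have xG: "x \<in> G" "x \<noteq> id" and zG: "z \<in> G" "z \<noteq> id" using vert_is_cls xz X(1) YV by auto
  have xp: "x permutes {1..n}" and zp: "z permutes {1..n}" using G_perm[OF G] xG zG by auto
  have zT: "perm_type n z \<in> types0 n G" using zG unfolding types0_def by auto
  show False
  proof (cases "perm_type n z = T")
    case True
    then have oe: "ordp n z = ordp n x" using xT unfolding ordp_def by simp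
    have "cyc z = cyc x"
      using xz(4) cyc_eq_same_ord[OF xp, of k] cyc_eq_same_ord[OF zp, of k] oe by auto
    then have "z \<in> cls G x" using zG unfolding cls_def by simp
    then have "Y = X" using vert_is_cls(1)[OF X(1) xz(1)] vert_is_cls(1)[OF YV xz(2)] cls_eq_of_mem by metis
    then show False using ne by simp
  next
    case False
    have "perm_type n z = type_pow T k \<or> T = type_pow (perm_type n z) k"
      using xz(4) type_pow_lemma[OF xp xz(3)] type_pow_lemma[OF zp xz(3)] xT by auto
    then show False using I False zT unfolding type_isolated_def by blast
  qed
qed

lemma isolated_kC:
  assumes G: "perm_subgroup n G" and I: "type_isolated n G T"
    and X: "X \<in> rpg_vertices G" "vertex_has_type n T X"
  shows "kC n (rcomp G X) T = 1"
proof -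
  have "rcomp G X = {X}"
  proof -
    have "(rpg_adj G)\<^sup>*\<^sup>* X Y \<Longrightarrow> Y = X" for Y
      by (erule converse_rtranclpE) (use isolated_no_adj[OF G I X] in auto)
    then show ?thesis using rcomp_self[OF X(1)] unfolding rcomp_def by auto
  qed
  moreover have "{Z \<in> {X}. vertex_has_type n T Z} = {X}" using X(2) by auto
  ultimately show ?thesis unfolding kC_def by simp
qed

theorem lemma6p6:
  fixes n :: nat and G :: "(nat \<Rightarrow> nat) set" and T :: "nat multiset"
  assumes "perm_subgroup n G"
    and "fusion_controlled n G"
    and "T \<in> types0 n G"
  shows "(\<forall>C\<in>rpg_components G. (\<exists>X\<in>C. vertex_has_type n T X) \<longrightarrow>
            real (card {C'\<in>rpg_components G. \<exists>X\<in>C'. vertex_has_type n T X})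
              = real (mu n G T) / (real (totient (type_order T)) * real (kC n C T)))
       \<and> (type_isolated n G T \<longrightarrow>
            real (card {C'\<in>rpg_components G. \<exists>X\<in>C'. vertex_has_type n T X})
              = real (mu n G T) / real (totient (type_order T)))"
proof -
  note G = assms(1) and F = assms(2) and T = assms(3)
  let ?CT = "{C'\<in>rpg_components G. \<exists>X\<in>C'. vertex_has_type n T X}"
  obtain q where q: "q \<in> G" "q \<noteq> id" "perm_type n q = T" using T unfolding types0_def by auto
  have qp: "q permutes {1..n}" using G_perm[OF G q(1)] .
  have tpos: "totient (type_order T) > 0" using ord_pos[OF qp] q unfolding ordp_def by simp
  have main: "real (card ?CT) = real (mu n G T) / (real (totient (type_order T)) * real (kC n C T))"
    if C: "C \<in> rpg_components G" "\<exists>X\<in>C. vertex_has_type n T X" for C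
  proof -
    have "card {X \<in> rpg_vertices G. vertex_has_type n T X} = (\<Sum>C'\<in>?CT. kC n C' T)"
      using count_VT[OF G] .
    also have "\<dots> = (\<Sum>C'\<in>?CT. kC n C T)" using kC_transitive[OF G F C] by auto
    also have "\<dots> = card ?CT * kC n C T" by simp
    finally have e: "mu n G T = card ?CT * kC n C T * totient (type_order T)"
      using mu_count[OF G T] by simp
    obtain X where X: "X \<in> C" "vertex_has_type n T X" using C by auto
    have "finite C" using C finite_V[OF G] rcomp_sub components_alt by (auto intro: finite_subset)
    then have "kC n C T > 0" unfolding kC_def using X by (auto simp: card_gt_0_iff)
    then show ?thesis using e tpos by (simp add: field_simps)
  qed
  have part2: "real (card ?CT) = real (mu n G T) / real (totient (type_order T))"
    if I: "type_isolated n G T"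
  proof -
    have XV: "cls G q \<in> rpg_vertices G" "vertex_has_type n T (cls G q)"
      using q cls_self[of q G] unfolding rpg_vertices_def vertex_has_type_def by auto
    have "rcomp G (cls G q) \<in> rpg_components G" using XV components_alt by auto
    moreover have "\<exists>X\<in>rcomp G (cls G q). vertex_has_type n T X" using rcomp_self[OF XV(1)] XV by auto
    ultimately show ?thesis using main isolated_kC[OF G I XV] by simp
  qed
  show ?thesis using main part2 by blast
qed

end
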